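(* Let $\mathcal{L}$ be a Lindbladian on $\mathbb{C}^d$, and let $\mathcal{S}=\{\mathcal{E}_1,\dots,\mathcal{E}_k\}$ be a finite set of linearly independent quantum channels on operators on $\mathbb{C}^d$. Suppose that (1) the identity map $\mathcal{I}$ lies in the convex hull $\mathrm{conv}[\mathcal{S}]$, and (2) there is a $k\times k$ $Q$-matrix $Q=(q_{ij})$ such that $\mathcal{L}\circ\mathcal{E}_i=\sum_{j=1}^k q_{ji}\,\mathcal{E}_j$ for every $i$. Then the dynamical semigroup $\Phi_t=e^{t\mathcal{L}}$ satisfies $\Phi_t\in\mathrm{conv}[\mathcal{S}]$ for all $t\ge0$.
   Context: A Lindbladian has GKSL form and generates the CPTP semigroup $(e^{t\mathcal{L}})_{t\ge0}$. A $k\times k$ $Q$-matrix (reversed transition-rate matrix) is a real matrix $Q=(q_{ij})$ with $q_{ij}\ge0$ for all $i\neq j$, finite diagonal entries, and each column summing to zero: $\sum_{i}q_{ij}=0$ for every $j$ (so $q_{jj}=-\sum_{i\neq j}q_{ij}\le0$). *)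

theory Defs
  imports "HOL-Analysis.Analysis"
begin

text \<open>Operators on C^d are d x d complex matrices of type complex^'d^'d;
  superoperators are arbitrary maps on them (linearity is imposed where needed).\<close>

type_synonym 'd cmat = "complex^'d^'d"
type_synonym 'd superop = "'d cmat \<Rightarrow> 'd cmat"

definition adj :: "'d::finite cmat \<Rightarrow> 'd cmat" where
  "adj A = (\<chi> i j. cnj (A $ j $ i))"

definition mtrace :: "'d::finite cmat \<Rightarrow> complex" where
  "mtrace A = (\<Sum>i\<in>UNIV. A $ i $ i)"

definition cscale :: "complex \<Rightarrow> 'd::finite cmat \<Rightarrow> 'd cmat" where
  "cscale c A = (\<chi> i j. c * A $ i $ j)"

definition clinear_superop :: "'d::finite superop \<Rightarrow> bool" where
  "clinear_superop E \<longleftrightarrow> (\<forall>X Y. E (X + Y) = E X + E Y) \<and> (\<forall>c X. E (cscale c X) = cscale c (E X))"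

text \<open>Positive semidefiniteness of an n x n block matrix with d x d blocks X a b
  (i.e. an nd x nd matrix), via its quadratic form.\<close>
definition psd_block :: "nat \<Rightarrow> (nat \<Rightarrow> nat \<Rightarrow> 'd::finite cmat) \<Rightarrow> bool" where
  "psd_block n X \<longleftrightarrow> (\<forall>v :: nat \<Rightarrow> complex^'d.
     (let s = (\<Sum>a<n. \<Sum>b<n. \<Sum>i\<in>UNIV. cnj (v a $ i) * ((X a b) *v (v b)) $ i)
      in Im s = 0 \<and> Re s \<ge> 0))"

text \<open>Complete positivity: id_n \<otimes> E is positive for every n.\<close>
definition completely_positive :: "'d::finite superop \<Rightarrow> bool" where
  "completely_positive E \<longleftrightarrow> (\<forall>n X. psd_block n X \<longrightarrow> psd_block n (\<lambda>a b. E (X a b)))"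

definition trace_preserving :: "'d::finite superop \<Rightarrow> bool" where
  "trace_preserving E \<longleftrightarrow> (\<forall>X. mtrace (E X) = mtrace X)"

definition quantum_channel :: "'d::finite superop \<Rightarrow> bool" where
  "quantum_channel E \<longleftrightarrow> clinear_superop E \<and> completely_positive E \<and> trace_preserving E"

definition lindbladian :: "'d::finite superop \<Rightarrow> bool" where
  "lindbladian L \<longleftrightarrow> (\<exists>(H::'d cmat) (Ls::'d cmat list). adj H = H \<and>
     (\<forall>\<rho>. L \<rho> = cscale (- \<i>) (H ** \<rho> - \<rho> ** H) +
        sum_list (map (\<lambda>A. A ** \<rho> ** adj A
                     - (1/2::real) *\<^sub>R (adj A ** A ** \<rho> + \<rho> ** (adj A ** A))) Ls)))"

definition sgexp :: "real \<Rightarrow> 'd::finite superop \<Rightarrow> 'd superop" where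
  "sgexp t L = (\<lambda>X. \<Sum>n. (t ^ n / fact n) *\<^sub>R (L ^^ n) X)"

definition lin_indep_superops :: "nat \<Rightarrow> (nat \<Rightarrow> 'd::finite superop) \<Rightarrow> bool" where
  "lin_indep_superops k E \<longleftrightarrow>
     (\<forall>c::nat \<Rightarrow> complex. (\<forall>X. (\<Sum>i<k. cscale (c i) (E i X)) = 0) \<longrightarrow> (\<forall>i<k. c i = 0))"

definition in_conv :: "'d::finite superop \<Rightarrow> nat \<Rightarrow> (nat \<Rightarrow> 'd superop) \<Rightarrow> bool" where
  "in_conv \<Phi> k E \<longleftrightarrow> (\<exists>p::nat \<Rightarrow> real. (\<forall>i<k. p i \<ge> 0) \<and> (\<Sum>i<k. p i) = 1 \<and>
      (\<forall>X. \<Phi> X = (\<Sum>i<k. p i *\<^sub>R E i X)))"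

text \<open>k x k Q-matrix (reversed transition-rate matrix): nonnegative off-diagonal, zero column sums.\<close>
definition Q_matrix :: "nat \<Rightarrow> (nat \<Rightarrow> nat \<Rightarrow> real) \<Rightarrow> bool" where
  "Q_matrix k q \<longleftrightarrow> (\<forall>i<k. \<forall>j<k. i \<noteq> j \<longrightarrow> q i j \<ge> 0) \<and> (\<forall>j<k. (\<Sum>i<k. q i j) = 0)"

end

theory Submission imports Defs begin

lemma lin_mm: "linear (\<lambda>X::'d::finite cmat. A ** X ** B)"
  apply (rule linearI)
  apply (simp_all add: vec_eq_iff matrix_matrix_mult_def sum_distrib_left sum_distrib_right algebra_simps sum.distrib scaleR_sum_right)
  done

lemma lin_cscale: "linear (\<lambda>X::'d::finite cmat. cscale c X)"
  apply (rule linearI)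
  apply (simp_all add: vec_eq_iff cscale_def algebra_simps)
  done

lemma lin_scaleR: "linear f \<Longrightarrow> linear (\<lambda>x. (c::real) *\<^sub>R f x)"
  by (rule linearI) (simp_all add: linear_add linear_scale algebra_simps)

lemma lin_list: "(\<And>A. linear (f A)) \<Longrightarrow> linear (\<lambda>X. sum_list (map (\<lambda>A. f A X) Ls))"
  by (induction Ls) (auto intro: linear_compose_add linear_zero)

lemma lindbladian_linear:
  assumes "lindbladian (L::'d::finite superop)"
  shows "linear L"
proof -
  obtain H Ls where HL: "\<forall>\<rho>. L \<rho> = cscale (- \<i>) (H ** \<rho> - \<rho> ** H) +
        sum_list (map (\<lambda>A. A ** \<rho> ** adj A
                     - (1/2::real) *\<^sub>R (adj A ** A ** \<rho> + \<rho> ** (adj A ** A))) Ls)"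
    using assms unfolding lindbladian_def by blast
  have e: "L = (\<lambda>\<rho>. cscale (- \<i>) (H ** \<rho> - \<rho> ** H) +
        sum_list (map (\<lambda>A. A ** \<rho> ** adj A
                     - (1/2::real) *\<^sub>R (adj A ** A ** \<rho> + \<rho> ** (adj A ** A))) Ls))"
    using HL by auto
  have l1: "linear (\<lambda>\<rho>::'d cmat. H ** \<rho> ** mat 1 - mat 1 ** \<rho> ** H)"
    by (intro linear_compose_sub lin_mm)
  have l1': "linear (\<lambda>\<rho>::'d cmat. cscale (- \<i>) (H ** \<rho> - \<rho> ** H))"
    using linear_compose[OF l1 lin_cscale[of "- \<i>"]] by (simp add: o_def matrix_mul_rid matrix_mul_lid)
  have l2: "linear (\<lambda>\<rho>::'d cmat. A ** \<rho> ** adj A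
                     - (1/2::real) *\<^sub>R (adj A ** A ** \<rho> ** mat 1 + mat 1 ** \<rho> ** (adj A ** A)))" for A
    by (intro linear_compose_sub lin_scaleR linear_compose_add lin_mm)
  have l2': "linear (\<lambda>\<rho>::'d cmat. A ** \<rho> ** adj A
                     - (1/2::real) *\<^sub>R (adj A ** A ** \<rho> + \<rho> ** (adj A ** A)))" for A
    using l2[of A] by (simp add: matrix_mul_rid matrix_mul_lid)
  show ?thesis unfolding e
    by (intro linear_compose_add l1' lin_list l2')
qed

definition Aop :: "nat \<Rightarrow> (nat \<Rightarrow> nat \<Rightarrow> real) \<Rightarrow> (nat \<Rightarrow> real) \<Rightarrow> nat \<Rightarrow> real" where
  "Aop k q v = (\<lambda>j. \<Sum>l<k. q j l * v l)"

definition Bop :: "nat \<Rightarrow> (nat \<Rightarrow> nat \<Rightarrow> real) \<Rightarrow> real \<Rightarrow> (nat \<Rightarrow> real) \<Rightarrow> nat \<Rightarrow> real" where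
  "Bop k q c v = (\<lambda>j. Aop k q v j + c * v j)"

lemma binom_step:
  fixes g :: "nat \<Rightarrow> real"
  shows "(\<Sum>i\<le>n. of_nat (n choose i) * x^(n-i) * (g (Suc i) + x * g i)) =
         (\<Sum>i\<le>Suc n. of_nat (Suc n choose i) * x^(Suc n - i) * g i)"
proof -
  have a: "(\<Sum>i\<le>n. of_nat (n choose i) * x^(Suc n-i) * g i) =
        (\<Sum>i\<le>Suc n. of_nat (n choose i) * x^(Suc n-i) * g i)"
    by simp
  also have "\<dots> = x^(Suc n) * g 0 + (\<Sum>i\<le>n. of_nat (n choose Suc i) * x^(n-i) * g (Suc i))"
    by (subst sum.atMost_Suc_shift) simp
  finally have a': "(\<Sum>i\<le>n. of_nat (n choose i) * x^(Suc n-i) * g i) =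
     x^(Suc n) * g 0 + (\<Sum>i\<le>n. of_nat (n choose Suc i) * x^(n-i) * g (Suc i))" .
  have "(\<Sum>i\<le>n. of_nat (n choose i) * x^(n-i) * (g (Suc i) + x * g i)) =
     (\<Sum>i\<le>n. of_nat (n choose i) * x^(n-i) * g (Suc i)) + (\<Sum>i\<le>n. of_nat (n choose i) * x^(Suc n-i) * g i)"
    by (simp add: sum.distrib[symmetric] algebra_simps Suc_diff_le)
  also have "\<dots> = x^(Suc n) * g 0 + (\<Sum>i\<le>n. of_nat (Suc n choose Suc i) * x^(n-i) * g (Suc i))"
  proof -
    have "(\<Sum>i\<le>n. of_nat (Suc n choose Suc i) * x^(n-i) * g (Suc i)) =
      (\<Sum>i\<le>n. of_nat (n choose i) * x^(n-i) * g (Suc i)) + (\<Sum>i\<le>n. of_nat (n choose Suc i) * x^(n-i) * g (Suc i))"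
      by (simp add: sum.distrib[symmetric] algebra_simps)
    then show ?thesis unfolding a' by simp
  qed
  also have "\<dots> = (\<Sum>i\<le>Suc n. of_nat (Suc n choose i) * x^(Suc n - i) * g i)"
    by (subst sum.atMost_Suc_shift) simp
  finally show ?thesis .
qed

lemma Aop_sum:
  "Aop k q (\<lambda>j. \<Sum>i\<in>I. f i * g i j) = (\<lambda>j. \<Sum>i\<in>I. f i * Aop k q (g i) j)"
  unfolding Aop_def by (auto simp: sum_distrib_left sum_distrib_right algebra_simps intro!: ext sum.swap)

lemma pow_binom:
  "(Aop k q ^^ n) p j = (\<Sum>i\<le>n. of_nat (n choose i) * (-c)^(n-i) * (Bop k q c ^^ i) p j)"
proof (induction n arbitrary: j)
  case 0
  then show ?case by simp
next
  case (Suc n)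
  have e: "(Aop k q ^^ n) p = (\<lambda>j. \<Sum>i\<le>n. of_nat (n choose i) * (-c)^(n-i) * (Bop k q c ^^ i) p j)"
    using Suc by auto
  have st: "Aop k q ((Bop k q c ^^ i) p) j = (Bop k q c ^^ Suc i) p j + (-c) * (Bop k q c ^^ i) p j" for i j
    by (simp add: Bop_def)
  have "(Aop k q ^^ Suc n) p j = Aop k q ((Aop k q ^^ n) p) j" by simp
  also have "\<dots> = (\<Sum>i\<le>n. of_nat (n choose i) * (-c)^(n-i) * Aop k q ((Bop k q c ^^ i) p) j)"
    unfolding e using Aop_sum[of k q "\<lambda>i. of_nat (n choose i) * (-c)^(n-i)" "\<lambda>i. (Bop k q c ^^ i) p" "{..n}"]
    by simp
  also have "\<dots> = (\<Sum>i\<le>Suc n. of_nat (Suc n choose i) * (-c)^(Suc n-i) * (Bop k q c ^^ i) p j)"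
    unfolding st using binom_step[of n "-c" "\<lambda>i. (Bop k q c ^^ i) p j"] by simp
  finally show ?case .
qed



lemma r_nonneg:
  assumes Q: "Q_matrix k q" and c: "\<forall>j<k. \<bar>q j j\<bar> \<le> c" and p: "\<forall>j<k. p j \<ge> 0"
  shows "\<forall>j<k. (Bop k q c ^^ n) p j \<ge> 0"
proof (induction n)
  case 0
  then show ?case using p by simp
next
  case (Suc n)
  show ?case
  proof (intro allI impI)
    fix j assume j: "j < k"
    let ?v = "(Bop k q c ^^ n) p"
    have "(\<Sum>l<k. q j l * ?v l) + c * ?v j = (\<Sum>l\<in>{..<k}-{j}. q j l * ?v l) + (q j j + c) * ?v j"
      using j by (simp add: sum.remove[of "{..<k}" j] algebra_simps)
    also have "\<dots> \<ge> 0"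
    proof -
      have h1: "0 \<le> q j l" "0 \<le> ?v l" if "l \<in> {..<k} - {j}" for l
        using that Q j Suc unfolding Q_matrix_def by auto
      have h2: "0 \<le> q j j + c" using c j by force
      have h3: "0 \<le> ?v j" using Suc j by auto
      show ?thesis using h1 by (intro add_nonneg_nonneg[OF sum_nonneg mult_nonneg_nonneg[OF h2 h3]] mult_nonneg_nonneg) auto
    qed
    finally show "(Bop k q c ^^ Suc n) p j \<ge> 0" by (simp add: Bop_def Aop_def)
  qed
qed

lemma Aop_colsum:
  assumes Q: "Q_matrix k q"
  shows "(\<Sum>j<k. Aop k q v j) = 0"
proof -
  have "(\<Sum>j<k. Aop k q v j) = (\<Sum>l<k. (\<Sum>j<k. q j l) * v l)"
    unfolding Aop_def by (simp add: sum_distrib_right) (rule sum.swap)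
  also have "\<dots> = 0" using Q unfolding Q_matrix_def by simp
  finally show ?thesis .
qed

lemma r_sum:
  assumes Q: "Q_matrix k q"
  shows "(\<Sum>j<k. (Bop k q c ^^ n) p j) = c^n * (\<Sum>j<k. p j)"
proof (induction n)
  case 0 then show ?case by simp
next
  case (Suc n)
  have "(\<Sum>j<k. (Bop k q c ^^ Suc n) p j) = (\<Sum>j<k. Aop k q ((Bop k q c ^^ n) p) j) + c * (\<Sum>j<k. (Bop k q c ^^ n) p j)"
    by (simp add: Bop_def sum.distrib sum_distrib_left)
  then show ?case using Suc Aop_colsum[OF Q] by simp
qed

lemma p_sum:
  assumes Q: "Q_matrix k q"
  shows "(\<Sum>j<k. (Aop k q ^^ n) p j) = (if n = 0 then (\<Sum>j<k. p j) else 0)"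
  using Aop_colsum[OF Q] by (cases n) auto


lemma series_nonneg:
  assumes Q: "Q_matrix k q" and c: "\<forall>j<k. \<bar>q j j\<bar> \<le> c" and c0: "c \<ge> 0"
    and p: "\<forall>j<k. p j \<ge> 0" and p1: "(\<Sum>j<k. p j) = 1" and t: "t \<ge> 0" and j: "j < k"
  shows "summable (\<lambda>n. t^n / fact n * (Aop k q ^^ n) p j) \<and> 0 \<le> (\<Sum>n. t^n / fact n * (Aop k q ^^ n) p j)"
proof -
  define r where "r n = (Bop k q c ^^ n) p j" for n
  have r0: "0 \<le> r n" for n using r_nonneg[OF Q c p] j unfolding r_def by auto
  have r1: "r n \<le> c^n" for n
  proof -
    have "r n \<le> (\<Sum>j<k. (Bop k q c ^^ n) p j)"
      unfolding r_def using j r_nonneg[OF Q c p] by (intro member_le_sum) auto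
    then show ?thesis using r_sum[OF Q, where c=c and n=n and p=p] p1 by simp
  qed
  define a where "a m = t^m / fact m * r m" for m
  define b where "b l = (-c*t)^l / fact l" for l
  have se: "summable (\<lambda>n. (c*t)^n / fact n)"
    using summable_exp[of "c*t"] by (simp add: divide_inverse mult.commute)
  have sa: "summable (\<lambda>m. norm (a m))"
  proof (rule summable_comparison_test[OF _ se])
    show "\<exists>N. \<forall>n\<ge>N. norm (norm (a n)) \<le> (c * t) ^ n / fact n"
    proof (intro exI allI impI)
      fix n
      have "norm (norm (a n)) = t^n / fact n * r n" unfolding a_def using r0 t by simp
      also have "\<dots> \<le> t^n / fact n * c^n" using r1 t by (intro mult_left_mono) auto
      also have "\<dots> = (c*t)^n / fact n" by (simp add: power_mult_distrib)
      finally show "norm (norm (a n)) \<le> (c * t) ^ n / fact n" .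
    qed
  qed
  have nb: "norm (b m) = (c*t)^m / fact m" for m
  proof -
    have "norm (b m) = \<bar>-c*t\<bar>^m / fact m" unfolding b_def by (simp add: power_abs)
    also have "\<bar>-c*t\<bar> = c*t" using c0 t by simp
    finally show ?thesis .
  qed
  have sb: "summable (\<lambda>m. norm (b m))"
    unfolding nb by (rule se)
  have cp: "(\<lambda>n. \<Sum>i\<le>n. a i * b (n - i)) sums (suminf a * suminf b)"
    by (rule Cauchy_product_sums[OF sa sb])
  have id: "(\<Sum>i\<le>n. a i * b (n - i)) = t^n / fact n * (Aop k q ^^ n) p j" for n
  proof -
    have "t^n / fact n * (Aop k q ^^ n) p j = (\<Sum>i\<le>n. t^n / fact n * (of_nat (n choose i) * (-c)^(n-i) * r i))"
      unfolding pow_binom[where k=k and q=q and n=n and p=p and j=j and c=c] r_def by (simp add: sum_distrib_left)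
    also have "\<dots> = (\<Sum>i\<le>n. a i * b (n - i))"
    proof (rule sum.cong[OF refl])
      fix i assume "i \<in> {..n}"
      then have i: "i \<le> n" by simp
      have tn: "t^n = t^i * t^(n-i)" using i by (simp add: power_add[symmetric])
      show "t^n / fact n * (of_nat (n choose i) * (-c)^(n-i) * r i) = a i * b (n - i)"
      proof -
        have f1: "fact n \<noteq> (0::real)" "fact i \<noteq> (0::real)" "fact (n-i) \<noteq> (0::real)" by auto
        have "(-c*t)^(n-i) = (-c)^(n-i) * t^(n-i)" by (rule power_mult_distrib)
        then show ?thesis unfolding a_def b_def binomial_fact[OF i] tn
          using f1 by (simp add: divide_simps)
      qed
    qed
    finally show ?thesis by simp
  qed
  have bb: "b = (\<lambda>n. (-c*t)^n /\<^sub>R fact n)"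
    unfolding b_def by (rule ext) (simp add: divide_inverse mult.commute)
  have eb: "suminf b = exp (-c*t)"
    unfolding bb by (rule sums_unique[symmetric, OF exp_converges])
  have sumv: "(\<lambda>n. t^n / fact n * (Aop k q ^^ n) p j) sums (suminf a * suminf b)"
    using cp unfolding id .
  have "0 \<le> suminf a" using sa unfolding a_def
    by (intro suminf_nonneg) (auto simp: r0 t summable_rabs_cancel)
  then have "0 \<le> suminf a * suminf b" unfolding eb by simp
  then show ?thesis using sumv by (simp add: sums_iff)
qed


lemma L_step:
  fixes L :: "'a::real_vector \<Rightarrow> 'a" and E :: "nat \<Rightarrow> 'b \<Rightarrow> 'a"
  assumes lin: "linear L" and h: "\<forall>i<k. \<forall>X. L (E i X) = (\<Sum>j<k. q j i *\<^sub>R E j X)"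
  shows "L (\<Sum>i<k. v i *\<^sub>R E i X) = (\<Sum>j<k. Aop k q v j *\<^sub>R E j X)"
proof -
  have "L (\<Sum>i<k. v i *\<^sub>R E i X) = (\<Sum>i<k. v i *\<^sub>R (\<Sum>j<k. q j i *\<^sub>R E j X))"
    using h by (simp add: linear_sum[OF lin] linear_scale[OF lin])
  also have "\<dots> = (\<Sum>i<k. \<Sum>j<k. (q j i * v i) *\<^sub>R E j X)"
    by (simp add: scaleR_sum_right mult.commute)
  also have "\<dots> = (\<Sum>j<k. \<Sum>i<k. (q j i * v i) *\<^sub>R E j X)"
    by (rule sum.swap)
  also have "\<dots> = (\<Sum>j<k. Aop k q v j *\<^sub>R E j X)"
    by (simp add: Aop_def scaleR_sum_left)
  finally show ?thesis .
qed

lemma L_pow: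
  fixes L :: "'a::real_vector \<Rightarrow> 'a" and E :: "nat \<Rightarrow> 'a \<Rightarrow> 'a"
  assumes lin: "linear L" and h: "\<forall>i<k. \<forall>X. L (E i X) = (\<Sum>j<k. q j i *\<^sub>R E j X)"
    and id: "\<forall>X. X = (\<Sum>i<k. p i *\<^sub>R E i X)"
  shows "(L ^^ n) X = (\<Sum>j<k. (Aop k q ^^ n) p j *\<^sub>R E j X)"
proof (induction n)
  case 0 then show ?case using id by simp
next
  case (Suc n) then show ?case using L_step[OF lin h] by simp
qed

theorem lemma1:
  fixes L :: "'d::finite superop"
    and E :: "nat \<Rightarrow> 'd superop"
    and k :: nat
    and q :: "nat \<Rightarrow> nat \<Rightarrow> real"
  assumes "lindbladian L"
    and "\<forall>i<k. quantum_channel (E i)"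
    and "lin_indep_superops k E"
    and "in_conv (\<lambda>X. X) k E"
    and "Q_matrix k q"
    and "\<forall>i<k. \<forall>X. L (E i X) = (\<Sum>j<k. q j i *\<^sub>R E j X)"
  shows "\<forall>t\<ge>0. in_conv (sgexp t L) k E"
proof (intro allI impI)
  fix t :: real assume t: "t \<ge> 0"
  have lin: "linear L" using assms(1) by (rule lindbladian_linear)
  obtain p where p: "\<forall>i<k. p i \<ge> 0" "(\<Sum>i<k. p i) = 1" "\<forall>X. X = (\<Sum>i<k. p i *\<^sub>R E i X)"
    using assms(4) unfolding in_conv_def by auto
  define c where "c = (\<Sum>i<k. \<bar>q i i\<bar>)"
  have c: "\<forall>j<k. \<bar>q j j\<bar> \<le> c" unfolding c_def
    by (auto intro!: member_le_sum[where f = "\<lambda>i. \<bar>q i i\<bar>"])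
  have c0: "c \<ge> 0" unfolding c_def by (simp add: sum_nonneg)
  define f where "f j n = t^n / fact n * (Aop k q ^^ n) p j" for j n
  define P where "P j = suminf (f j)" for j
  have sf: "summable (f j)" and P0: "0 \<le> P j" if "j < k" for j
    using series_nonneg[OF assms(5) c c0 p(1) p(2) t that] unfolding f_def P_def by auto
  have P1: "(\<Sum>j<k. P j) = 1"
  proof -
    have "(\<Sum>j<k. P j) = (\<Sum>n. \<Sum>j<k. f j n)"
      unfolding P_def by (rule suminf_sum[symmetric]) (simp add: sf)
    also have "(\<lambda>n. \<Sum>j<k. f j n) = (\<lambda>n. if n = 0 then 1 else 0)"
    proof (rule ext)
      fix n
      have "(\<Sum>j<k. f j n) = t^n / fact n * (\<Sum>j<k. (Aop k q ^^ n) p j)"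
        unfolding f_def by (simp add: sum_distrib_left)
      then show "(\<Sum>j<k. f j n) = (if n = 0 then 1 else 0)"
        by (simp add: p_sum[OF assms(5)] p(2))
    qed
    also have "(\<Sum>n. if n = 0 then (1::real) else 0) = 1"
      using sums_single[of 0 "\<lambda>_. 1::real"] by (simp add: sums_iff)
    finally show ?thesis .
  qed
  show "in_conv (sgexp t L) k E"
    unfolding in_conv_def
  proof (intro exI conjI allI impI)
    show "0 \<le> P i" if "i < k" for i using P0 that .
    show "(\<Sum>i<k. P i) = 1" by (rule P1)
    fix X
    have "sgexp t L X = (\<Sum>n. \<Sum>j<k. f j n *\<^sub>R E j X)"
      unfolding sgexp_def f_def L_pow[OF lin assms(6) p(3)]
      by (simp add: scaleR_sum_right)
    also have "\<dots> = (\<Sum>j<k. \<Sum>n. f j n *\<^sub>R E j X)"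
      by (rule suminf_sum) (simp add: sf summable_scaleR_left)
    also have "\<dots> = (\<Sum>j<k. P j *\<^sub>R E j X)"
      unfolding P_def by (intro sum.cong refl suminf_scaleR_left[symmetric] sf) simp
    finally show "sgexp t L X = (\<Sum>j<k. P j *\<^sub>R E j X)" .
  qed
qed

end
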